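(* If $0\neq f\in F(\mathfrak B)$ has degree $k$, then all identities $w^{(j)}_{(\mu_1,\mu_2)}=0$ with $\mu_2\ge k$ (and $0\le j\le\mu_1-\mu_2$) are consequences of $f=0$, i.e. all such $w^{(j)}_{(\mu_1,\mu_2)}$ lie in the T-ideal generated by $f$.
   Context: $K$ is a field of characteristic $0$. $\mathfrak B$ is the variety of bicommutative algebras (identities $(x_1x_2)x_3=(x_1x_3)x_2$, $x_1(x_2x_3)=x_2(x_1x_3)$), with free algebra $F(\mathfrak B)$ on $x_1,x_2,\dots$; a T-ideal is a two-sided ideal closed under all endomorphisms. Model: with $K[Y,Z]$ the commutative polynomial ring in $y_1,y_2,\dots,z_1,z_2,\dots$, the algebra $G$ has basis $\{x_i\}\cup\{Y^\alpha Z^\beta:|\alpha|,|\beta|>0\}$ and multiplication $x_ix_j=y_iz_j$, $x_i\cdot(Y^\alpha Z^\beta)=y_iY^\alpha Z^\beta$, $(Y^\alpha Z^\beta)\cdot x_j=Y^\alpha Z^\beta z_j$, $(Y^\alpha Z^\beta)(Y^\gamma Z^\delta)=Y^{\alpha+\gamma}Z^{\beta+\delta}$; it is known that $x_i\mapsto x_i$ gives an isomorphism $F(\mathfrak B)\cong G$, so elements of $F(\mathfrak B)^2$ are written as polynomials in the $y_i,z_i$. For $\mu=(\mu_1,\mu_2)$ with $\mu_2>0$, $w^{(j)}_\mu=y_1^j(y_1z_2-y_2z_1)^{\mu_2}z_1^{\mu_1-\mu_2-j}$, $0\le j\le\mu_1-\mu_2$. *)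

theory Defs
  imports Main "HOL-Library.Poly_Mapping"
begin

text \<open>Concrete model G of the free bicommutative algebra F(B) over a field K.
  Generators are indexed by nat: the paper's x_1, x_2, ... are our indices 0, 1, ...
  Commuting variables y_i, z_i of K[Y,Z]: \<close>

datatype var = Yv nat | Zv nat

type_synonym mono = "var \<Rightarrow>\<^sub>0 nat"
type_synonym 'k pol = "mono \<Rightarrow>\<^sub>0 'k"

text \<open>An element of G: a linear part (coefficients of the x_i) and a polynomial part
  (a linear combination of Y^a Z^b with |a|,|b| > 0).\<close>
type_synonym 'k bel = "(nat \<Rightarrow>\<^sub>0 'k) \<times> 'k pol"

definition pvar :: "var \<Rightarrow> 'k::comm_ring_1 pol" where
  "pvar v = Poly_Mapping.single (Poly_Mapping.single v 1) 1"

definition admissible_mono :: "mono \<Rightarrow> bool" where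
  "admissible_mono m \<longleftrightarrow> (\<exists>i. Yv i \<in> Poly_Mapping.keys m) \<and> (\<exists>i. Zv i \<in> Poly_Mapping.keys m)"

definition FB :: "('k::field) bel set" where
  "FB = {(a, p). \<forall>m \<in> Poly_Mapping.keys p. admissible_mono m}"

definition bzero :: "('k::field) bel" where
  "bzero = (0, 0)"

definition badd :: "('k::field) bel \<Rightarrow> 'k bel \<Rightarrow> 'k bel" where
  "badd u v = (fst u + fst v, snd u + snd v)"

definition bsmul :: "'k::field \<Rightarrow> 'k bel \<Rightarrow> 'k bel" where
  "bsmul c u = (Poly_Mapping.map ((*) c) (fst u), Poly_Mapping.map ((*) c) (snd u))"

definition ylin :: "(nat \<Rightarrow>\<^sub>0 'k::field) \<Rightarrow> 'k pol" where
  "ylin a = (\<Sum>i\<in>Poly_Mapping.keys a. Poly_Mapping.single (Poly_Mapping.single (Yv i) 1) (Poly_Mapping.lookup a i))"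

definition zlin :: "(nat \<Rightarrow>\<^sub>0 'k::field) \<Rightarrow> 'k pol" where
  "zlin a = (\<Sum>i\<in>Poly_Mapping.keys a. Poly_Mapping.single (Poly_Mapping.single (Zv i) 1) (Poly_Mapping.lookup a i))"

text \<open>Multiplication of G, extended bilinearly:
  x_i x_j = y_i z_j, x_i P = y_i P, P x_j = P z_j, P Q = PQ.
  Hence (a + P)(b + Q) = (ylin a + P)(zlin b + Q).\<close>
definition bmul :: "('k::field) bel \<Rightarrow> 'k bel \<Rightarrow> 'k bel" where
  "bmul u v = (0, (ylin (fst u) + snd u) * (zlin (fst v) + snd v))"

definition gen :: "nat \<Rightarrow> ('k::field) bel" where
  "gen i = (Poly_Mapping.single i 1, 0)"

definition endo :: "(('k::field) bel \<Rightarrow> 'k bel) \<Rightarrow> bool" where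
  "endo \<phi> \<longleftrightarrow> (\<forall>u\<in>FB. \<phi> u \<in> FB)
     \<and> (\<forall>u\<in>FB. \<forall>v\<in>FB. \<phi> (badd u v) = badd (\<phi> u) (\<phi> v))
     \<and> (\<forall>c. \<forall>u\<in>FB. \<phi> (bsmul c u) = bsmul c (\<phi> u))
     \<and> (\<forall>u\<in>FB. \<forall>v\<in>FB. \<phi> (bmul u v) = bmul (\<phi> u) (\<phi> v))"

definition bideal :: "('k::field) bel set \<Rightarrow> bool" where
  "bideal I \<longleftrightarrow> I \<subseteq> FB \<and> bzero \<in> I
     \<and> (\<forall>u\<in>I. \<forall>v\<in>I. badd u v \<in> I)
     \<and> (\<forall>c. \<forall>u\<in>I. bsmul c u \<in> I)
     \<and> (\<forall>u\<in>I. \<forall>v\<in>FB. bmul u v \<in> I \<and> bmul v u \<in> I)"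

definition T_ideal :: "('k::field) bel set \<Rightarrow> bool" where
  "T_ideal I \<longleftrightarrow> bideal I \<and> (\<forall>\<phi>. endo \<phi> \<longrightarrow> \<phi> ` I \<subseteq> I)"

definition T_ideal_gen :: "('k::field) bel \<Rightarrow> 'k bel set" where
  "T_ideal_gen f = \<Inter>{I. T_ideal I \<and> f \<in> I}"

definition mdeg :: "mono \<Rightarrow> nat" where
  "mdeg m = (\<Sum>v\<in>Poly_Mapping.keys m. Poly_Mapping.lookup m v)"

definition bdeg :: "('k::field) bel \<Rightarrow> nat" where
  "bdeg u = Max ((if fst u = 0 then {} else {1}) \<union> mdeg ` Poly_Mapping.keys (snd u))"

text \<open>w^(j)_mu = y_1^j (y_1 z_2 - y_2 z_1)^{mu_2} z_1^{mu_1 - mu_2 - j} (paper indices 1,2 = our 0,1).\<close>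
definition w_elem :: "nat \<Rightarrow> nat \<Rightarrow> nat \<Rightarrow> ('k::field) bel" where
  "w_elem j mu1 mu2 = (0,
     pvar (Yv 0) ^ j * (pvar (Yv 0) * pvar (Zv 1) - pvar (Yv 1) * pvar (Zv 0)) ^ mu2
       * pvar (Zv 0) ^ (mu1 - mu2 - j))"

end

theory Submission
  imports Defs "HOL-Computational_Algebra.Polynomial"
begin

definition Cst :: "'k::comm_ring_1 \<Rightarrow> 'k pol" where "Cst c = Poly_Mapping.single 0 c"

lemma Cst_add: "Cst (a + b) = Cst a + Cst b" by (simp add: Cst_def single_add)
lemma Cst_mult: "Cst (a * b) = Cst a * Cst b" by (simp add: Cst_def mult_single)
lemma Cst_0[simp]: "Cst 0 = 0" by (simp add: Cst_def)
lemma Cst_1[simp]: "Cst 1 = 1" by (simp add: Cst_def)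
lemma Cst_minus: "Cst (- a) = - Cst a" by (simp add: Cst_def single_uminus)
lemma Cst_diff: "Cst (a - b) = Cst a - Cst b" by (simp add: Cst_def single_diff)
lemma Cst_power: "Cst (a ^ n) = Cst a ^ n" by (induct n) (simp_all add: Cst_mult)
lemma Cst_sum: "Cst (sum f A) = (\<Sum>x\<in>A. Cst (f x))"
  by (induct A rule: infinite_finite_induct) (simp_all add: Cst_add)
lemma Cst_prod: "Cst (prod f A) = (\<Prod>x\<in>A. Cst (f x))"
  by (induct A rule: infinite_finite_induct) (simp_all add: Cst_mult)
lemma Cst_eq_0_iff: "Cst a = 0 \<longleftrightarrow> a = 0"
  by (metis Cst_0 Cst_def inj_single injD)
lemma map_mult_Cst: "Poly_Mapping.map ((*) c) P = Cst c * P"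
  by (simp add: Cst_def mult_map_scale_conv_mult)

definition me :: "(var \<Rightarrow> 'k::comm_ring_1 pol) \<Rightarrow> mono \<Rightarrow> 'k pol" where
 "me \<rho> m = (\<Prod>v\<in>Poly_Mapping.keys m. \<rho> v ^ Poly_Mapping.lookup m v)"

lemma me_superset: "finite A \<Longrightarrow> Poly_Mapping.keys m \<subseteq> A \<Longrightarrow>
   me \<rho> m = (\<Prod>v\<in>A. \<rho> v ^ Poly_Mapping.lookup m v)"
  unfolding me_def
  by (rule prod.mono_neutral_left) (auto simp: in_keys_iff)

lemma me_zero[simp]: "me \<rho> 0 = 1" by (simp add: me_def)

lemma me_add: "me \<rho> (m + n) = me \<rho> m * me \<rho> n"
proof -
  let ?A = "Poly_Mapping.keys m \<union> Poly_Mapping.keys n"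
  have f: "finite ?A" by simp
  have "me \<rho> (m + n) = (\<Prod>v\<in>?A. \<rho> v ^ Poly_Mapping.lookup (m+n) v)"
    using keys_add[of m n] by (intro me_superset) auto
  also have "\<dots> = (\<Prod>v\<in>?A. \<rho> v ^ Poly_Mapping.lookup m v) * (\<Prod>v\<in>?A. \<rho> v ^ Poly_Mapping.lookup n v)"
    by (simp add: lookup_add power_add prod.distrib)
  also have "\<dots> = me \<rho> m * me \<rho> n"
    by (subst (1 2) me_superset[OF f]) auto
  finally show ?thesis .
qed

lemma me_single: "me \<rho> (Poly_Mapping.single v e) = \<rho> v ^ e"
  by (cases "e = 0") (simp_all add: me_def)

definition S :: "(var \<Rightarrow> 'k::comm_ring_1 pol) \<Rightarrow> 'k pol \<Rightarrow> 'k pol" where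
 "S \<rho> P = (\<Sum>m\<in>Poly_Mapping.keys P. Cst (Poly_Mapping.lookup P m) * me \<rho> m)"

lemma S_superset: "finite A \<Longrightarrow> Poly_Mapping.keys P \<subseteq> A \<Longrightarrow>
   S \<rho> P = (\<Sum>m\<in>A. Cst (Poly_Mapping.lookup P m) * me \<rho> m)"
  unfolding S_def
  by (rule sum.mono_neutral_left) (auto simp: in_keys_iff)

lemma S_0[simp]: "S \<rho> 0 = 0" by (simp add: S_def)

lemma S_add: "S \<rho> (P + Q) = S \<rho> P + S \<rho> Q"
proof -
  let ?A = "Poly_Mapping.keys P \<union> Poly_Mapping.keys Q"
  have f: "finite ?A" by simp
  have "S \<rho> (P + Q) = (\<Sum>m\<in>?A. Cst (Poly_Mapping.lookup (P+Q) m) * me \<rho> m)"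
    using keys_add[of P Q] by (intro S_superset) auto
  also have "\<dots> = (\<Sum>m\<in>?A. Cst (Poly_Mapping.lookup P m) * me \<rho> m) + (\<Sum>m\<in>?A. Cst (Poly_Mapping.lookup Q m) * me \<rho> m)"
    by (simp add: lookup_add Cst_add distrib_right sum.distrib)
  also have "\<dots> = S \<rho> P + S \<rho> Q"
    by (subst (1 2) S_superset[OF f]) auto
  finally show ?thesis .
qed

lemma S_single: "S \<rho> (Poly_Mapping.single m c) = Cst c * me \<rho> m"
  by (cases "c = 0") (simp_all add: S_def)

lemma S_sum: "S \<rho> (sum f A) = (\<Sum>x\<in>A. S \<rho> (f x))"
  by (induct A rule: infinite_finite_induct) (simp_all add: S_add)

lemma S_minus: "S \<rho> (- P) = - S \<rho> P"
proof -
  have "S \<rho> P + S \<rho> (-P) = 0" using S_add[of \<rho> P "-P"] by simp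
  then show ?thesis by (metis neg_eq_iff_add_eq_0)
qed

lemma S_diff: "S \<rho> (P - Q) = S \<rho> P - S \<rho> Q"
  using S_add[of \<rho> P "-Q"] S_minus[of \<rho> Q] by simp

lemma pm_expand: "(P::'a \<Rightarrow>\<^sub>0 'b::comm_monoid_add) = (\<Sum>m\<in>Poly_Mapping.keys P. Poly_Mapping.single m (Poly_Mapping.lookup P m))"
proof (rule poly_mapping_eqI)
  fix k
  show "Poly_Mapping.lookup P k = Poly_Mapping.lookup (\<Sum>m\<in>Poly_Mapping.keys P. Poly_Mapping.single m (Poly_Mapping.lookup P m)) k"
    by (auto simp add: lookup_sum lookup_single when_def in_keys_iff)
qed

lemma S_mult: "S \<rho> (P * Q) = S \<rho> P * S \<rho> Q"
proof -
  have "P * Q = (\<Sum>m\<in>Poly_Mapping.keys P. Poly_Mapping.single m (Poly_Mapping.lookup P m)) *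
       (\<Sum>n\<in>Poly_Mapping.keys Q. Poly_Mapping.single n (Poly_Mapping.lookup Q n))"
    by (simp only: pm_expand[symmetric])
  also have "\<dots> = (\<Sum>m\<in>Poly_Mapping.keys P. \<Sum>n\<in>Poly_Mapping.keys Q.
        Poly_Mapping.single (m + n) (Poly_Mapping.lookup P m * Poly_Mapping.lookup Q n))"
    by (simp add: sum_product mult_single)
  finally have "S \<rho> (P * Q) = (\<Sum>m\<in>Poly_Mapping.keys P. \<Sum>n\<in>Poly_Mapping.keys Q.
        (Cst (Poly_Mapping.lookup P m) * me \<rho> m) * (Cst (Poly_Mapping.lookup Q n) * me \<rho> n))"
    by (simp add: S_sum S_single me_add Cst_mult ac_simps)
  also have "\<dots> = S \<rho> P * S \<rho> Q"
    by (simp add: S_def sum_product)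
  finally show ?thesis .
qed

lemma S_Cst[simp]: "S \<rho> (Cst c) = Cst c"
  by (simp add: Cst_def S_single)

lemma S_1[simp]: "S \<rho> 1 = 1"
  using S_Cst[of \<rho> 1] by simp

lemma S_pvar[simp]: "S \<rho> (pvar v) = \<rho> v"
  by (simp add: pvar_def S_single me_single)

lemma S_power: "S \<rho> (P ^ n) = S \<rho> P ^ n"
  by (induct n) (simp_all add: S_mult)

lemma S_prod: "S \<rho> (prod f A) = (\<Prod>x\<in>A. S \<rho> (f x))"
  by (induct A rule: infinite_finite_induct) (simp_all add: S_mult)

lemma pvar_power: "pvar v ^ e = Poly_Mapping.single (Poly_Mapping.single v e) (1::'k::comm_ring_1)"
proof (induct e)
  case 0 then show ?case by simp
next
  case (Suc e)
  then show ?case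
    by (simp add: pvar_def mult_single single_add[symmetric])
qed

lemma prod_single1: "(\<Prod>i\<in>A. Poly_Mapping.single (f i) (1::'k::comm_ring_1)) =
   Poly_Mapping.single (\<Sum>i\<in>A. f i :: mono) 1"
  by (induct A rule: infinite_finite_induct) (simp_all add: mult_single)

lemma me_pvar: "me pvar m = Poly_Mapping.single m (1::'k::comm_ring_1)"
proof -
  have "me pvar m = (\<Prod>v\<in>Poly_Mapping.keys m. Poly_Mapping.single (Poly_Mapping.single v (Poly_Mapping.lookup m v)) (1::'k))"
    by (simp add: me_def pvar_power)
  also have "\<dots> = Poly_Mapping.single m 1"
    by (simp add: prod_single1 pm_expand[symmetric])
  finally show ?thesis .
qed

lemma Cst_mult_single1: "Cst c * Poly_Mapping.single m 1 = Poly_Mapping.single m c"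
  by (simp add: Cst_def mult_single)

lemma S_id: "S pvar P = P"
  unfolding S_def me_pvar Cst_mult_single1 by (rule pm_expand[symmetric])

lemma S_me: "S \<sigma> (me \<rho> m) = me (\<lambda>v. S \<sigma> (\<rho> v)) m"
  by (simp add: me_def S_prod S_power)

lemma S_comp: "S \<sigma> (S \<rho> P) = S (\<lambda>v. S \<sigma> (\<rho> v)) P"
proof -
  have "S \<sigma> (S \<rho> P) = (\<Sum>m\<in>Poly_Mapping.keys P. Cst (Poly_Mapping.lookup P m) * S \<sigma> (me \<rho> m))"
    by (simp add: S_def[of \<rho> P] S_sum S_mult)
  then show ?thesis by (simp add: S_me S_def[of _ P])
qed

lemma S_cong: "(\<And>m v. m \<in> Poly_Mapping.keys P \<Longrightarrow> v \<in> Poly_Mapping.keys m \<Longrightarrow> \<rho> v = \<rho>' v) \<Longrightarrow> S \<rho> P = S \<rho>' P"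
  unfolding S_def me_def by (intro sum.cong refl arg_cong2[where f="(*)"] prod.cong) auto

lemma me_scale: "me (\<lambda>v. X * \<rho> v) m = X ^ mdeg m * me \<rho> m"
  by (simp add: me_def mdeg_def power_mult_distrib prod.distrib power_sum)

lemma S_hom: "(\<And>m. m \<in> Poly_Mapping.keys P \<Longrightarrow> mdeg m = d) \<Longrightarrow> S (\<lambda>v. X * \<rho> v) P = X ^ d * S \<rho> P"
  unfolding S_def me_scale by (simp add: sum_distrib_left ac_simps)

lemma S_Cst_fun: "S (\<lambda>v. Cst (c v)) P = Cst (\<Sum>m\<in>Poly_Mapping.keys P. Poly_Mapping.lookup P m * (\<Prod>v\<in>Poly_Mapping.keys m. c v ^ Poly_Mapping.lookup m v))"
  by (simp add: S_def me_def Cst_sum Cst_mult Cst_prod Cst_power)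

lemma vand:
  fixes J :: "('k::field_char_0) pol set" and p :: "'k pol poly"
  assumes J0: "0 \<in> J" and Jadd: "\<And>x y. x \<in> J \<Longrightarrow> y \<in> J \<Longrightarrow> x + y \<in> J"
    and Jsm: "\<And>x c. x \<in> J \<Longrightarrow> Cst c * x \<in> J"
    and fin: "finite E" and ev: "\<And>t. t \<notin> E \<Longrightarrow> poly p (Cst t) \<in> J"
  shows "coeff p r \<in> J"
  using fin ev
proof (induction "degree p" arbitrary: p E r rule: less_induct)
  case less
  have Jdiff: "x - y \<in> J" if "x \<in> J" "y \<in> J" for x y
  proof -
    have "x + Cst (-1) * y \<in> J" using that Jadd Jsm by blast
    then show ?thesis by (simp add: Cst_minus)
  qed
  obtain t0 :: 'k where t0: "t0 \<notin> E"
    using ex_new_if_finite[OF infinite_UNIV_char_0 less.prems(1)] by blast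
  define q where "q = synthetic_div p (Cst t0)"
  have corr: "p + smult (Cst t0) q = pCons (poly p (Cst t0)) q"
    unfolding q_def by (rule synthetic_div_correct)
  have pt0: "poly p (Cst t0) \<in> J" using less.prems(2) t0 by blast
  have qJ: "poly q (Cst t) \<in> J" if "t \<notin> insert t0 E" for t
  proof -
    have "poly (p + smult (Cst t0) q) (Cst t) = poly (pCons (poly p (Cst t0)) q) (Cst t)"
      by (simp only: corr)
    then have e: "poly p (Cst t) + Cst t0 * poly q (Cst t) = poly p (Cst t0) + Cst t * poly q (Cst t)"
      by simp
    have "Cst (1 / (t - t0)) * (poly p (Cst t) - poly p (Cst t0)) \<in> J"
      using Jsm Jdiff less.prems(2) that pt0 by simp
    also have "Cst (1 / (t - t0)) * (poly p (Cst t) - poly p (Cst t0)) =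
        Cst (1 / (t - t0)) * (Cst (t - t0) * poly q (Cst t))"
    proof -
      have "poly p (Cst t) = poly p (Cst t0) + Cst t * poly q (Cst t) - Cst t0 * poly q (Cst t)"
        by (metis e add_diff_cancel_right')
      then have d: "poly p (Cst t) - poly p (Cst t0) = Cst (t - t0) * poly q (Cst t)"
        by (simp add: Cst_diff algebra_simps)
      show ?thesis by (simp only: d)
    qed
    also have "\<dots> = poly q (Cst t)"
      using that by (simp add: mult.assoc[symmetric] Cst_mult[symmetric])
    finally show ?thesis .
  qed
  have cq: "coeff q s \<in> J" for s
  proof (cases "degree p = 0")
    case True
    then have "q = 0" unfolding q_def by (simp add: synthetic_div_eq_0_iff)
    then show ?thesis using J0 by simp
  next
    case False
    then have "degree q < degree p" unfolding q_def by (simp add: degree_synthetic_div)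
    then show ?thesis using less.hyps[of q "insert t0 E"] less.prems(1) qJ by blast
  qed
  show ?case
  proof (cases r)
    case 0
    have "coeff (p + smult (Cst t0) q) 0 = coeff (pCons (poly p (Cst t0)) q) 0" by (simp only: corr)
    then have "coeff p 0 = poly p (Cst t0) - Cst t0 * coeff q 0" by (simp add: algebra_simps)
    then show ?thesis using 0 Jdiff pt0 Jsm cq by simp
  next
    case (Suc s)
    have "coeff (p + smult (Cst t0) q) (Suc s) = coeff (pCons (poly p (Cst t0)) q) (Suc s)" by (simp only: corr)
    then have "coeff p (Suc s) = coeff q s - Cst t0 * coeff q (Suc s)" by (simp add: algebra_simps)
    then show ?thesis using Suc Jdiff Jsm cq by simp
  qed
qed

lemma vand_sum:
  fixes J :: "('k::field_char_0) pol set"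
  assumes J0: "0 \<in> J" and Jadd: "\<And>x y. x \<in> J \<Longrightarrow> y \<in> J \<Longrightarrow> x + y \<in> J"
    and Jsm: "\<And>x c. x \<in> J \<Longrightarrow> Cst c * x \<in> J"
    and ev: "\<And>t. (\<Sum>r<n. Cst t ^ r * X r) \<in> J"
    and r: "r < n"
  shows "X r \<in> J"
proof -
  define p where "p = (\<Sum>r<n. monom (X r) r)"
  have "coeff p r \<in> J"
  proof (rule vand[OF J0 Jadd Jsm, of "{}"])
    fix t
    show "poly p (Cst t) \<in> J" using ev[of t] by (simp add: p_def poly_sum poly_monom mult.commute)
  qed simp_all
  moreover have "coeff p r = X r" using r by (simp add: p_def coeff_sum)
  ultimately show ?thesis by simp
qed

definition cf :: "var \<Rightarrow> nat \<Rightarrow> 'k::comm_ring_1 pol \<Rightarrow> 'k pol" where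
 "cf v r Q = (\<Sum>m\<in>Poly_Mapping.keys Q. if Poly_Mapping.lookup m v = r
     then Poly_Mapping.single (Poly_Mapping.update v 0 m) (Poly_Mapping.lookup Q m) else 0)"

lemma upd_split: "Poly_Mapping.update v 0 m + Poly_Mapping.single v (Poly_Mapping.lookup m v) = (m::mono)"
  by (rule poly_mapping_eqI) (simp add: lookup_add lookup_update lookup_single when_def)

lemma cf_free: "m \<in> Poly_Mapping.keys (cf v r Q) \<Longrightarrow> v \<notin> Poly_Mapping.keys m"
proof -
  assume a: "m \<in> Poly_Mapping.keys (cf v r Q)"
  have "Poly_Mapping.keys (cf v r Q) \<subseteq> (\<Union>m'\<in>Poly_Mapping.keys Q. Poly_Mapping.keys (if Poly_Mapping.lookup m' v = r
     then Poly_Mapping.single (Poly_Mapping.update v 0 m') (Poly_Mapping.lookup Q m') else 0))"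
    unfolding cf_def by (rule keys_sum)
  also have "\<dots> \<subseteq> (\<Union>m'\<in>Poly_Mapping.keys Q. {Poly_Mapping.update v 0 m'})"
    by (intro UN_mono) auto
  finally obtain m' where "m = Poly_Mapping.update v 0 m'" using a by blast
  then show ?thesis by (simp add: in_keys_iff lookup_update)
qed
lemma cf_decomp:
  assumes n: "\<And>m. m \<in> Poly_Mapping.keys Q \<Longrightarrow> Poly_Mapping.lookup m v < n"
  shows "(\<Sum>r<n. pvar v ^ r * cf v r Q) = (Q :: 'k::comm_ring_1 pol)"
proof -
  have "(\<Sum>r<n. pvar v ^ r * cf v r Q) = (\<Sum>r<n. \<Sum>m\<in>Poly_Mapping.keys Q.
      if Poly_Mapping.lookup m v = r then pvar v ^ r * Poly_Mapping.single (Poly_Mapping.update v 0 m) (Poly_Mapping.lookup Q m) else 0)"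
    unfolding cf_def sum_distrib_left by (intro sum.cong refl) simp
  also have "\<dots> = (\<Sum>m\<in>Poly_Mapping.keys Q. \<Sum>r<n.
      if Poly_Mapping.lookup m v = r then pvar v ^ r * Poly_Mapping.single (Poly_Mapping.update v 0 m) (Poly_Mapping.lookup Q m) else 0)"
    by (rule sum.swap)
  also have "\<dots> = (\<Sum>m\<in>Poly_Mapping.keys Q. pvar v ^ Poly_Mapping.lookup m v * Poly_Mapping.single (Poly_Mapping.update v 0 m) (Poly_Mapping.lookup Q m))"
    by (intro sum.cong refl) (simp add: sum.delta' n)
  also have "\<dots> = (\<Sum>m\<in>Poly_Mapping.keys Q. Poly_Mapping.single m (Poly_Mapping.lookup Q m))"
    by (rule sum.cong) (simp_all add: pvar_power mult_single add.commute upd_split)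
  also have "\<dots> = Q" by (rule pm_expand[symmetric])
  finally show ?thesis .
qed

lemma S_decomp:
  assumes n: "\<And>m. m \<in> Poly_Mapping.keys Q \<Longrightarrow> Poly_Mapping.lookup m v < n"
  shows "S \<rho> Q = (\<Sum>r<n. \<rho> v ^ r * S \<rho> (cf v r Q))"
proof -
  have "S \<rho> Q = S \<rho> (\<Sum>r<n. pvar v ^ r * cf v r Q)" by (simp only: cf_decomp[OF n])
  then show ?thesis by (simp add: S_sum S_mult S_power)
qed

lemma MV:
  fixes J :: "('k::field_char_0) pol set"
  assumes J0: "0 \<in> J" and Jadd: "\<And>x y. x \<in> J \<Longrightarrow> y \<in> J \<Longrightarrow> x + y \<in> J"
    and Jmul: "\<And>x q. x \<in> J \<Longrightarrow> q * x \<in> J"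
    and fin: "finite F"
    and hyp: "\<And>c. S (\<lambda>v. if v \<in> F then Cst (c v) else pvar v) Q \<in> J"
  shows "S (\<lambda>v. if v \<in> F then \<rho> v else pvar v) Q \<in> J"
  using fin hyp
proof (induction F arbitrary: Q \<rho> rule: finite_induct)
  case empty
  then show ?case by simp
next
  case (insert v F)
  have Jsm: "\<And>x c. x \<in> J \<Longrightarrow> Cst c * x \<in> J" using Jmul by blast
  have Jsum: "(\<Sum>i\<in>A. f i) \<in> J" if "\<And>i. i \<in> A \<Longrightarrow> f i \<in> J" for A and f :: "nat \<Rightarrow> 'k pol"
    using that by (induct A rule: infinite_finite_induct) (simp_all add: J0 Jadd)
  define n where "n = Suc (\<Sum>m\<in>Poly_Mapping.keys Q. Poly_Mapping.lookup m v)"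
  have n: "Poly_Mapping.lookup m v < n" if "m \<in> Poly_Mapping.keys Q" for m
  proof -
    have "Poly_Mapping.lookup m v \<le> (\<Sum>m\<in>Poly_Mapping.keys Q. Poly_Mapping.lookup m v)"
      using that by (intro member_le_sum) auto
    then show ?thesis unfolding n_def by simp
  qed
  have coefJ: "S (\<lambda>w. if w \<in> F then Cst (c w) else pvar w) (cf v r Q) \<in> J" if r: "r < n" for r c
  proof (rule vand_sum[OF J0 Jadd Jsm _ r])
    fix t
    let ?c' = "c(v := t)"
    let ?\<rho>' = "\<lambda>w. if w \<in> insert v F then Cst (?c' w) else pvar w"
    have "S ?\<rho>' Q \<in> J" by (rule insert.prems)
    also have "S ?\<rho>' Q = (\<Sum>r<n. ?\<rho>' v ^ r * S ?\<rho>' (cf v r Q))"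
      by (rule S_decomp) (rule n)
    also have "\<dots> = (\<Sum>r<n. Cst t ^ r * S (\<lambda>w. if w \<in> F then Cst (c w) else pvar w) (cf v r Q))"
    proof (rule sum.cong[OF refl])
      fix r
      have "S ?\<rho>' (cf v r Q) = S (\<lambda>w. if w \<in> F then Cst (c w) else pvar w) (cf v r Q)"
        by (rule S_cong) (use cf_free in fastforce)
      then show "?\<rho>' v ^ r * S ?\<rho>' (cf v r Q) = Cst t ^ r * S (\<lambda>w. if w \<in> F then Cst (c w) else pvar w) (cf v r Q)"
        by simp
    qed
    finally show "(\<Sum>r<n. Cst t ^ r * S (\<lambda>w. if w \<in> F then Cst (c w) else pvar w) (cf v r Q)) \<in> J" .
  qed
  have IH: "S (\<lambda>w. if w \<in> F then \<rho> w else pvar w) (cf v r Q) \<in> J" if "r < n" for r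
    using insert.IH[of "cf v r Q"] coefJ[OF that] by blast
  let ?\<rho>F = "\<lambda>w. if w \<in> insert v F then \<rho> w else pvar w"
  have "S ?\<rho>F Q = (\<Sum>r<n. ?\<rho>F v ^ r * S ?\<rho>F (cf v r Q))"
    by (rule S_decomp) (rule n)
  also have "\<dots> = (\<Sum>r<n. \<rho> v ^ r * S (\<lambda>w. if w \<in> F then \<rho> w else pvar w) (cf v r Q))"
  proof (rule sum.cong[OF refl])
    fix r
    have "S ?\<rho>F (cf v r Q) = S (\<lambda>w. if w \<in> F then \<rho> w else pvar w) (cf v r Q)"
      by (rule S_cong) (use cf_free in fastforce)
    then show "?\<rho>F v ^ r * S ?\<rho>F (cf v r Q) = \<rho> v ^ r * S (\<lambda>w. if w \<in> F then \<rho> w else pvar w) (cf v r Q)"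
      by simp
  qed
  also have "\<dots> \<in> J"
    by (rule Jsum) (use IH Jmul in blast)
  finally show ?case .
qed

definition lin :: "(nat \<Rightarrow> var) \<Rightarrow> (nat \<Rightarrow>\<^sub>0 'k::comm_ring_1) \<Rightarrow> 'k pol" where
  "lin V a = (\<Sum>i\<in>Poly_Mapping.keys a. Poly_Mapping.single (Poly_Mapping.single (V i) 1) (Poly_Mapping.lookup a i))"

lemma ylin_lin: "ylin = lin Yv" by (simp add: fun_eq_iff ylin_def lin_def)
lemma zlin_lin: "zlin = lin Zv" by (simp add: fun_eq_iff zlin_def lin_def)

lemma single_pvar: "Poly_Mapping.single (Poly_Mapping.single v 1) c = Cst c * pvar v"
  by (simp add: pvar_def Cst_mult_single1)

lemma lin_superset: "finite A \<Longrightarrow> Poly_Mapping.keys a \<subseteq> A \<Longrightarrow>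
   lin V a = (\<Sum>i\<in>A. Cst (Poly_Mapping.lookup a i) * pvar (V i))"
  unfolding lin_def single_pvar
  by (rule sum.mono_neutral_left) (auto simp: in_keys_iff)

lemma lin_add: "lin V (a + b) = lin V a + lin V b"
proof -
  let ?A = "Poly_Mapping.keys a \<union> Poly_Mapping.keys b"
  have f: "finite ?A" by simp
  have "lin V (a + b) = (\<Sum>i\<in>?A. Cst (Poly_Mapping.lookup (a+b) i) * pvar (V i))"
    using keys_add[of a b] by (intro lin_superset) auto
  also have "\<dots> = (\<Sum>i\<in>?A. Cst (Poly_Mapping.lookup a i) * pvar (V i)) + (\<Sum>i\<in>?A. Cst (Poly_Mapping.lookup b i) * pvar (V i))"
    by (simp add: lookup_add Cst_add distrib_right sum.distrib)
  also have "\<dots> = lin V a + lin V b"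
    by (subst (1 2) lin_superset[OF f]) auto
  finally show ?thesis .
qed

lemma lin_0[simp]: "lin V 0 = 0" by (simp add: lin_def)

lemma lookup_smul: "Poly_Mapping.lookup (Poly_Mapping.single 0 c * a) i = c * Poly_Mapping.lookup a i"
  by (simp add: mult_map_scale_conv_mult[symmetric] map.rep_eq when_def)

lemma keys_smul: "Poly_Mapping.keys (Poly_Mapping.single 0 (c::'k::comm_ring_1) * a) \<subseteq> Poly_Mapping.keys a"
  by (auto simp: in_keys_iff lookup_smul)

lemma lin_smul: "lin V (Poly_Mapping.single 0 c * a) = Cst c * lin V a"
proof -
  have "lin V (Poly_Mapping.single 0 c * a) = (\<Sum>i\<in>Poly_Mapping.keys a. Cst (Poly_Mapping.lookup (Poly_Mapping.single 0 c * a) i) * pvar (V i))"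
    using keys_smul by (intro lin_superset) auto
  also have "\<dots> = Cst c * lin V a"
    by (simp only: lookup_smul) (simp add: Cst_mult lin_superset[of "Poly_Mapping.keys a"] sum_distrib_left ac_simps)
  finally show ?thesis .
qed

lemma lin_sum: "lin V (sum f A) = (\<Sum>x\<in>A. lin V (f x))"
  by (induct A rule: infinite_finite_induct) (simp_all add: lin_add)

lemma lin_single: "lin V (Poly_Mapping.single i c) = Cst c * pvar (V i)"
proof -
  have "lin V (Poly_Mapping.single i c) = Poly_Mapping.single (Poly_Mapping.single (V i) 1) c"
    by (cases "c = 0") (simp_all add: lin_def)
  then show ?thesis by (simp only: single_pvar)
qed

lemma S_lin: "S \<rho> (lin V a) = (\<Sum>i\<in>Poly_Mapping.keys a. Cst (Poly_Mapping.lookup a i) * \<rho> (V i))"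
  by (simp add: lin_superset[of "Poly_Mapping.keys a"] S_sum S_mult)

definition lmap :: "(nat \<Rightarrow> (nat \<Rightarrow>\<^sub>0 'k)) \<Rightarrow> (nat \<Rightarrow>\<^sub>0 'k::comm_ring_1) \<Rightarrow> (nat \<Rightarrow>\<^sub>0 'k)" where
  "lmap L a = (\<Sum>i\<in>Poly_Mapping.keys a. Poly_Mapping.single 0 (Poly_Mapping.lookup a i) * L i)"

lemma lmap_superset: "finite A \<Longrightarrow> Poly_Mapping.keys a \<subseteq> A \<Longrightarrow>
   lmap L a = (\<Sum>i\<in>A. Poly_Mapping.single 0 (Poly_Mapping.lookup a i) * L i)"
  unfolding lmap_def
  by (rule sum.mono_neutral_left) (auto simp: in_keys_iff)

lemma lmap_add: "lmap L (a + b) = lmap L a + lmap L b"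
proof -
  let ?A = "Poly_Mapping.keys a \<union> Poly_Mapping.keys b"
  have f: "finite ?A" by simp
  have "lmap L (a + b) = (\<Sum>i\<in>?A. Poly_Mapping.single 0 (Poly_Mapping.lookup (a+b) i) * L i)"
    using keys_add[of a b] by (intro lmap_superset) auto
  also have "\<dots> = (\<Sum>i\<in>?A. Poly_Mapping.single 0 (Poly_Mapping.lookup a i) * L i) + (\<Sum>i\<in>?A. Poly_Mapping.single 0 (Poly_Mapping.lookup b i) * L i)"
    by (simp add: lookup_add single_add distrib_right sum.distrib)
  also have "\<dots> = lmap L a + lmap L b"
    by (subst (1 2) lmap_superset[OF f]) auto
  finally show ?thesis .
qed

lemma lmap_0[simp]: "lmap L 0 = 0" by (simp add: lmap_def)

lemma lmap_smul: "lmap L (Poly_Mapping.single 0 c * a) = Poly_Mapping.single 0 c * lmap L a"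
proof -
  have "lmap L (Poly_Mapping.single 0 c * a) = (\<Sum>i\<in>Poly_Mapping.keys a. Poly_Mapping.single 0 (Poly_Mapping.lookup (Poly_Mapping.single 0 c * a) i) * L i)"
    using keys_smul by (intro lmap_superset) auto
  also have "\<dots> = Poly_Mapping.single 0 c * lmap L a"
    by (simp only: lookup_smul) (simp add: mult_single lmap_def sum_distrib_left ac_simps)
  finally show ?thesis .
qed

definition rhoL :: "(nat \<Rightarrow> (nat \<Rightarrow>\<^sub>0 'k)) \<Rightarrow> var \<Rightarrow> 'k::comm_ring_1 pol" where
  "rhoL L v = (case v of Yv i \<Rightarrow> lin Yv (L i) | Zv i \<Rightarrow> lin Zv (L i))"

lemma S_rhoL_lin:
  assumes "V = Yv \<or> V = Zv"
  shows "S (rhoL L) (lin V a) = lin V (lmap L a)"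
proof -
  have "S (rhoL L) (lin V a) = (\<Sum>i\<in>Poly_Mapping.keys a. Cst (Poly_Mapping.lookup a i) * lin V (L i))"
    using assms by (auto simp: S_lin rhoL_def)
  also have "\<dots> = lin V (lmap L a)"
    by (simp add: lmap_def lin_sum lin_smul)
  finally show ?thesis .
qed

definition phi :: "(nat \<Rightarrow> (nat \<Rightarrow>\<^sub>0 'k)) \<Rightarrow> 'k bel \<Rightarrow> 'k::field bel" where
  "phi L u = (lmap L (fst u), S (rhoL L) (snd u))"

definition allY :: "'k::comm_ring_1 pol \<Rightarrow> bool" where
  "allY p \<longleftrightarrow> (\<forall>m\<in>Poly_Mapping.keys p. \<exists>i. Yv i \<in> Poly_Mapping.keys m)"
definition allZ :: "'k::comm_ring_1 pol \<Rightarrow> bool" where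
  "allZ p \<longleftrightarrow> (\<forall>m\<in>Poly_Mapping.keys p. \<exists>i. Zv i \<in> Poly_Mapping.keys m)"

definition allV :: "(var \<Rightarrow> bool) \<Rightarrow> 'k::comm_ring_1 pol \<Rightarrow> bool" where
  "allV Pr p \<longleftrightarrow> (\<forall>m\<in>Poly_Mapping.keys p. \<exists>v. Pr v \<and> v \<in> Poly_Mapping.keys m)"

lemma keys_add_mono: "v \<in> Poly_Mapping.keys (a::mono) \<Longrightarrow> v \<in> Poly_Mapping.keys (a + b) \<and> v \<in> Poly_Mapping.keys (b + a)"
  by (simp add: in_keys_iff lookup_add)

lemma allV_mult1: "allV Pr p \<Longrightarrow> allV Pr (p * q)"
  unfolding allV_def using keys_mult[of p q] keys_add_mono by blast
lemma allV_mult2: "allV Pr q \<Longrightarrow> allV Pr (p * q)"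
  using allV_mult1[of Pr q p] by (simp add: mult.commute)
lemma allV_0[simp]: "allV Pr 0" by (simp add: allV_def)
lemma allV_add: "allV Pr p \<Longrightarrow> allV Pr q \<Longrightarrow> allV Pr (p + q)"
  unfolding allV_def using keys_add[of p q] by blast
lemma allV_sum: "(\<And>x. x \<in> A \<Longrightarrow> allV Pr (f x)) \<Longrightarrow> allV Pr (sum f A)"
  by (induct A rule: infinite_finite_induct) (simp_all add: allV_add)

lemma allV_lin: "allV (\<lambda>v. \<exists>i. v = V i) (lin V a)"
  unfolding lin_def
  by (rule allV_sum) (auto simp: allV_def)

lemma allV_me: "allV Pr (\<rho> v) \<Longrightarrow> v \<in> Poly_Mapping.keys m \<Longrightarrow> allV Pr (me \<rho> m)"
proof -
  assume a: "allV Pr (\<rho> v)" and v: "v \<in> Poly_Mapping.keys m"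
  have "me \<rho> m = \<rho> v ^ Poly_Mapping.lookup m v * (\<Prod>w\<in>Poly_Mapping.keys m - {v}. \<rho> w ^ Poly_Mapping.lookup m w)"
    unfolding me_def using v by (simp add: prod.remove)
  moreover have "\<rho> v ^ Poly_Mapping.lookup m v = \<rho> v * \<rho> v ^ (Poly_Mapping.lookup m v - 1)"
    using v by (metis in_keys_iff power_eq_if)
  ultimately show ?thesis using a by (simp add: allV_mult1)
qed

lemma allV_S: "(\<And>m. m \<in> Poly_Mapping.keys P \<Longrightarrow> \<exists>v\<in>Poly_Mapping.keys m. allV Pr (\<rho> v)) \<Longrightarrow> allV Pr (S \<rho> P)"
  unfolding S_def by (rule allV_sum) (metis allV_me allV_mult2)

lemma admissible_allV: "admissible_mono m \<longleftrightarrow>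
   (\<exists>v. (\<exists>i. v = Yv i) \<and> v \<in> Poly_Mapping.keys m) \<and> (\<exists>v. (\<exists>i. v = Zv i) \<and> v \<in> Poly_Mapping.keys m)"
  by (auto simp: admissible_mono_def)

lemma phi_FB: "u \<in> FB \<Longrightarrow> phi L u \<in> FB"
proof -
  assume u: "u \<in> FB"
  obtain a P where uP: "u = (a, P)" by (cases u)
  have adm: "\<And>m. m \<in> Poly_Mapping.keys P \<Longrightarrow> admissible_mono m" using u uP by (auto simp: FB_def)
  have Y: "allV (\<lambda>v. \<exists>i. v = Yv i) (S (rhoL L) P)"
  proof (rule allV_S)
    fix m assume "m \<in> Poly_Mapping.keys P"
    then obtain i where "Yv i \<in> Poly_Mapping.keys m" using adm by (auto simp: admissible_mono_def)
    moreover have "allV (\<lambda>v. \<exists>i. v = Yv i) (rhoL L (Yv i))" by (simp add: rhoL_def allV_lin)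
    ultimately show "\<exists>v\<in>Poly_Mapping.keys m. allV (\<lambda>v. \<exists>i. v = Yv i) (rhoL L v)" by blast
  qed
  have Z: "allV (\<lambda>v. \<exists>i. v = Zv i) (S (rhoL L) P)"
  proof (rule allV_S)
    fix m assume "m \<in> Poly_Mapping.keys P"
    then obtain i where "Zv i \<in> Poly_Mapping.keys m" using adm by (auto simp: admissible_mono_def)
    moreover have "allV (\<lambda>v. \<exists>i. v = Zv i) (rhoL L (Zv i))" by (simp add: rhoL_def allV_lin)
    ultimately show "\<exists>v\<in>Poly_Mapping.keys m. allV (\<lambda>v. \<exists>i. v = Zv i) (rhoL L v)" by blast
  qed
  show ?thesis using Y Z unfolding uP phi_def FB_def allV_def admissible_allV by auto
qed

lemma endo_phi: "endo (phi L :: 'k::field bel \<Rightarrow> 'k bel)"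
  unfolding endo_def
proof (intro conjI ballI allI)
  fix u :: "'k bel" assume "u \<in> FB" then show "phi L u \<in> FB" by (rule phi_FB)
next
  fix u v :: "'k bel"
  show "phi L (badd u v) = badd (phi L u) (phi L v)"
    by (simp add: phi_def badd_def lmap_add S_add)
next
  fix c and u :: "'k bel"
  show "phi L (bsmul c u) = bsmul c (phi L u)"
    by (simp add: phi_def bsmul_def map_mult_Cst S_mult mult_map_scale_conv_mult lmap_smul)
next
  fix u v :: "'k bel"
  show "phi L (bmul u v) = bmul (phi L u) (phi L v)"
    by (simp add: phi_def bmul_def S_mult S_add ylin_lin zlin_lin S_rhoL_lin)
qed

lemma TI_bideal: "T_ideal I \<Longrightarrow> bideal I" by (simp add: T_ideal_def)

lemma J_0: "T_ideal I \<Longrightarrow> (0, 0) \<in> I"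
  by (auto simp: T_ideal_def bideal_def bzero_def)

lemma bideal_add: "bideal I \<Longrightarrow> u \<in> I \<Longrightarrow> v \<in> I \<Longrightarrow> badd u v \<in> I"
  unfolding bideal_def by blast
lemma bideal_smul: "bideal I \<Longrightarrow> u \<in> I \<Longrightarrow> bsmul c u \<in> I"
  unfolding bideal_def by blast
lemma bideal_FB: "bideal I \<Longrightarrow> u \<in> I \<Longrightarrow> u \<in> FB"
  unfolding bideal_def by blast
lemma bideal_mul: "bideal I \<Longrightarrow> u \<in> I \<Longrightarrow> v \<in> FB \<Longrightarrow> bmul u v \<in> I \<and> bmul v u \<in> I"
  unfolding bideal_def by blast

lemma J_add: "T_ideal I \<Longrightarrow> (0, P) \<in> I \<Longrightarrow> (0, Q) \<in> I \<Longrightarrow> (0, P + Q) \<in> I"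
proof -
  assume "T_ideal I" "(0, P) \<in> I" "(0, Q) \<in> I"
  then have "badd (0, P) (0, Q) \<in> I" by (simp add: T_ideal_def bideal_add)
  then show ?thesis by (simp add: badd_def)
qed

lemma map_mult_0: "Poly_Mapping.map ((*) c) (0::nat \<Rightarrow>\<^sub>0 'k::comm_ring_1) = 0"
  by (simp add: mult_map_scale_conv_mult)

lemma J_smul: "T_ideal I \<Longrightarrow> (0, P) \<in> I \<Longrightarrow> (0, Cst c * P) \<in> I"
proof -
  assume T: "T_ideal I" and P: "(0, P) \<in> I"
  have "bsmul c (0, P) \<in> I" using T P by (simp add: T_ideal_def bideal_smul)
  then show ?thesis by (simp add: bsmul_def map_mult_0 map_mult_Cst)
qed

lemma gen_FB: "gen i \<in> FB" by (simp add: gen_def FB_def)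

lemma J_mulvar: "T_ideal I \<Longrightarrow> (0, P) \<in> I \<Longrightarrow> (0, pvar v * (P::'k::field pol)) \<in> I"
proof -
  assume T: "T_ideal I" and P: "(0, P) \<in> I"
  have B: "bideal I" using T by (simp add: T_ideal_def)
  show ?thesis
  proof (cases v)
    case (Yv i)
    have "bmul (gen i) (0, P) \<in> I" using bideal_mul[OF B P gen_FB] by blast
    then show ?thesis using Yv by (simp add: bmul_def gen_def ylin_lin zlin_lin lin_single)
  next
    case (Zv i)
    have "bmul (0, P) (gen i) \<in> I" using bideal_mul[OF B P gen_FB] by blast
    then show ?thesis using Zv by (simp add: bmul_def gen_def ylin_lin zlin_lin lin_single mult.commute)
  qed
qed

definition Mset :: "'k::field bel set \<Rightarrow> 'k pol set" where
  "Mset I = {q. \<forall>P. (0, P) \<in> I \<longrightarrow> (0, q * P) \<in> I}"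

lemma J_mul: "T_ideal I \<Longrightarrow> (0, P) \<in> I \<Longrightarrow> (0, Q * (P::'k::field pol)) \<in> I"
proof -
  assume T: "T_ideal I" and P: "(0, P) \<in> I"
  have M0: "0 \<in> Mset I" using J_0[OF T] by (simp add: Mset_def)
  have M1: "1 \<in> Mset I" by (simp add: Mset_def)
  have Madd: "a + b \<in> Mset I" if "a \<in> Mset I" "b \<in> Mset I" for a b
    using that J_add[OF T] by (simp add: Mset_def distrib_right)
  have Mmul: "a * b \<in> Mset I" if "a \<in> Mset I" "b \<in> Mset I" for a b
    using that by (simp add: Mset_def mult.assoc)
  have MC: "Cst c \<in> Mset I" for c using J_smul[OF T] by (simp add: Mset_def)
  have Mv: "pvar v \<in> Mset I" for v using J_mulvar[OF T] by (simp add: Mset_def)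
  have Mpow: "a ^ n \<in> Mset I" if "a \<in> Mset I" for a n
    using that by (induct n) (simp_all add: M1 Mmul)
  have Mprod: "(\<Prod>x\<in>A. f x) \<in> Mset I" if "\<And>x. x \<in> A \<Longrightarrow> f x \<in> Mset I" for A and f :: "var \<Rightarrow> 'k pol"
    using that by (induct A rule: infinite_finite_induct) (simp_all add: M1 Mmul)
  have Msum: "(\<Sum>x\<in>A. f x) \<in> Mset I" if "\<And>x. x \<in> A \<Longrightarrow> f x \<in> Mset I" for A and f :: "mono \<Rightarrow> 'k pol"
    using that by (induct A rule: infinite_finite_induct) (simp_all add: M0 Madd)
  have "S pvar Q \<in> Mset I"
    unfolding S_def me_def by (intro Msum Mmul MC Mprod Mpow Mv)
  then show ?thesis using P by (simp add: S_id Mset_def)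
qed

lemma J_endo: "T_ideal I \<Longrightarrow> (0, P) \<in> I \<Longrightarrow> (0, S (rhoL L) P) \<in> I"
proof -
  assume T: "T_ideal I" and P: "(0, P) \<in> I"
  have "phi L ` I \<subseteq> I" using T endo_phi[of L] unfolding T_ideal_def by blast
  then have "phi L (0, P) \<in> I" using P by blast
  then show ?thesis by (simp add: phi_def)
qed

lemma J_sum: "T_ideal I \<Longrightarrow> (\<And>x. x \<in> A \<Longrightarrow> (0, f x) \<in> I) \<Longrightarrow> (0, \<Sum>x\<in>A. f x) \<in> I"
  by (induct A rule: infinite_finite_induct) (simp_all add: J_0 J_add)

definition hom :: "nat \<Rightarrow> 'k::comm_ring_1 pol \<Rightarrow> 'k pol" where
  "hom d P = (\<Sum>m\<in>Poly_Mapping.keys P. if mdeg m = d then Poly_Mapping.single m (Poly_Mapping.lookup P m) else 0)"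

lemma lookup_hom: "Poly_Mapping.lookup (hom d P) m = (if mdeg m = d then Poly_Mapping.lookup P m else 0)"
proof -
  have "Poly_Mapping.lookup (hom d P) m = (\<Sum>x\<in>Poly_Mapping.keys P. if x = m then (if mdeg m = d then Poly_Mapping.lookup P m else 0) else 0)"
    unfolding hom_def lookup_sum by (intro sum.cong refl) (auto simp: lookup_single when_def)
  then show ?thesis by (simp add: in_keys_iff)
qed

lemma keys_hom: "m \<in> Poly_Mapping.keys (hom d P) \<Longrightarrow> mdeg m = d \<and> m \<in> Poly_Mapping.keys P"
  by (simp add: in_keys_iff lookup_hom split: if_splits)

lemma sum_hom: "(\<And>m. m \<in> Poly_Mapping.keys P \<Longrightarrow> mdeg m < n) \<Longrightarrow> (\<Sum>d<n. hom d P) = P"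
proof (rule poly_mapping_eqI)
  fix m assume n: "\<And>m. m \<in> Poly_Mapping.keys P \<Longrightarrow> mdeg m < n"
  show "Poly_Mapping.lookup (\<Sum>d<n. hom d P) m = Poly_Mapping.lookup P m"
  proof (cases "m \<in> Poly_Mapping.keys P")
    case True
    then show ?thesis using n[OF True] by (simp add: lookup_sum lookup_hom)
  next
    case False
    then show ?thesis by (simp add: lookup_sum lookup_hom in_keys_iff)
  qed
qed

lemma rhoL_scale: "rhoL (\<lambda>i. Poly_Mapping.single i t) = (\<lambda>v. Cst t * pvar v)"
  by (rule ext) (simp add: rhoL_def lin_single split: var.splits)

lemma lmap_scale: "lmap (\<lambda>i. Poly_Mapping.single i t) a = Poly_Mapping.single 0 t * a"
proof -
  have "lmap (\<lambda>i. Poly_Mapping.single i t) a = (\<Sum>i\<in>Poly_Mapping.keys a. Poly_Mapping.single i (t * Poly_Mapping.lookup a i))"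
    by (simp add: lmap_def mult_single mult.commute)
  also have "\<dots> = Poly_Mapping.single 0 t * (\<Sum>i\<in>Poly_Mapping.keys a. Poly_Mapping.single i (Poly_Mapping.lookup a i))"
    by (simp add: sum_distrib_left mult_single)
  also have "\<dots> = Poly_Mapping.single 0 t * a" by (simp only: pm_expand[symmetric])
  finally show ?thesis .
qed

lemma mdeg_adm: "admissible_mono m \<Longrightarrow> 2 \<le> mdeg m"
proof -
  assume "admissible_mono m"
  then obtain i j where i: "Yv i \<in> Poly_Mapping.keys m" and j: "Zv j \<in> Poly_Mapping.keys m"
    by (auto simp: admissible_mono_def)
  have "Poly_Mapping.lookup m (Yv i) + Poly_Mapping.lookup m (Zv j) = (\<Sum>v\<in>{Yv i, Zv j}. Poly_Mapping.lookup m v)"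
    by simp
  also have "\<dots> \<le> mdeg m" unfolding mdeg_def using i j by (intro sum_mono2) auto
  finally show ?thesis using i j by (simp add: in_keys_iff)
qed

lemma comp_in:
  fixes a :: "nat \<Rightarrow>\<^sub>0 'k::field_char_0"
  assumes T: "T_ideal I" and f: "(a, P) \<in> I"
  shows "(0, P) \<in> I" "(a, 0) \<in> I" "\<And>d. (0, hom d P) \<in> I"
proof -
  have B: "bideal I" using T by (simp add: T_ideal_def)
  have FB: "(a, P) \<in> FB" using B f by (rule bideal_FB)
  then have adm: "\<And>m. m \<in> Poly_Mapping.keys P \<Longrightarrow> admissible_mono m" by (auto simp: FB_def)
  define n where "n = Suc (\<Sum>m\<in>Poly_Mapping.keys P. mdeg m)"
  have n: "mdeg m < n" if "m \<in> Poly_Mapping.keys P" for m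
  proof -
    have "mdeg m \<le> (\<Sum>m\<in>Poly_Mapping.keys P. mdeg m)" using that by (intro member_le_sum) auto
    then show ?thesis unfolding n_def by simp
  qed
  have hom1: "hom 1 P = 0"
    by (rule poly_mapping_eqI) (use adm mdeg_adm in \<open>fastforce simp: lookup_hom in_keys_iff\<close>)
  have homd: "(0, hom d P) \<in> I" if d: "d < n" "d \<noteq> 1" for d
  proof -
    define p where "p = (\<Sum>d<n. monom (hom d P) d) - monom P 1"
    have "coeff p d \<in> {Q. (0, Q) \<in> I}"
    proof (rule vand[of _ "{}"])
      show "0 \<in> {Q. (0, Q) \<in> I}" using J_0[OF T] by simp
      show "x + y \<in> {Q. (0, Q) \<in> I}" if "x \<in> {Q. (0, Q) \<in> I}" "y \<in> {Q. (0, Q) \<in> I}" for x y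
        using that J_add[OF T] by simp
      show "Cst c * x \<in> {Q. (0, Q) \<in> I}" if "x \<in> {Q. (0, Q) \<in> I}" for x c
        using that J_smul[OF T] by simp
    next
      fix t :: 'k
      let ?L = "\<lambda>i. Poly_Mapping.single i t"
      have "badd (phi ?L (a, P)) (bsmul (- t) (a, P)) \<in> I"
      proof -
        have "phi ?L (a, P) \<in> I" using T endo_phi[of ?L] f unfolding T_ideal_def by blast
        moreover have "bsmul (- t) (a, P) \<in> I" using B f by (rule bideal_smul)
        ultimately show ?thesis using B by (simp add: bideal_add)
      qed
      moreover have "fst (badd (phi ?L (a, P)) (bsmul (- t) (a, P))) = 0"
        by (simp add: badd_def phi_def bsmul_def lmap_scale mult_map_scale_conv_mult
             distrib_right[symmetric] single_add[symmetric])
      moreover have "snd (badd (phi ?L (a, P)) (bsmul (- t) (a, P))) = poly p (Cst t)"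
      proof -
        have "S (\<lambda>v. Cst t * pvar v) P = S (\<lambda>v. Cst t * pvar v) (\<Sum>d<n. hom d P)"
          by (simp only: sum_hom[OF n])
        also have "\<dots> = (\<Sum>d<n. Cst t ^ d * hom d P)"
          by (simp add: S_sum S_hom keys_hom S_id)
        finally have e: "S (\<lambda>v. Cst t * pvar v) P = (\<Sum>d<n. Cst t ^ d * hom d P)" .
        have r: "poly p (Cst t) = (\<Sum>d<n. Cst t ^ d * hom d P) - Cst t * P"
          by (simp add: p_def poly_sum poly_monom mult.commute)
        show ?thesis
          by (simp add: badd_def phi_def bsmul_def rhoL_scale e map_mult_Cst r Cst_minus)
      qed
      ultimately show "poly p (Cst t) \<in> {Q. (0, Q) \<in> I}"
        by (metis (mono_tags, lifting) mem_Collect_eq prod.collapse)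
    qed simp
    moreover have "coeff p d = hom d P" using d by (simp add: p_def coeff_sum)
    ultimately show ?thesis by simp
  qed
  show hd: "(0, hom d P) \<in> I" for d
  proof -
    consider "d < n" "d \<noteq> 1" | "d = 1" | "d \<ge> n" by linarith
    then show ?thesis
    proof cases
      case 1 then show ?thesis by (rule homd)
    next
      case 2 then show ?thesis using hom1 J_0[OF T] by simp
    next
      case 3
      have "hom d P = 0"
        by (rule poly_mapping_eqI) (use 3 n in \<open>fastforce simp: lookup_hom in_keys_iff\<close>)
      then show ?thesis using J_0[OF T] by simp
    qed
  qed
  have "(0, \<Sum>d<n. hom d P) \<in> I" by (rule J_sum[OF T]) (rule hd)
  then show P: "(0, P) \<in> I" by (simp only: sum_hom[OF n])
  have "badd (a, P) (bsmul (-1) (0, P)) \<in> I"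
    using B f P by (simp add: bideal_add bideal_smul)
  then show "(a, 0) \<in> I"
    by (simp add: badd_def bsmul_def map_mult_0 map_mult_Cst Cst_minus)
qed

abbreviation Dp :: "'k::comm_ring_1 pol" where
  "Dp \<equiv> pvar (Yv 0) * pvar (Zv 1) - pvar (Yv 1) * pvar (Zv 0)"

lemma finish:
  assumes T: "T_ideal I" and D: "(0, (Dp::'k::field pol) ^ d) \<in> I" and d: "d \<le> mu2"
  shows "(w_elem j mu1 mu2 :: 'k bel) \<in> I"
proof -
  have e: "pvar (Yv 0) ^ j * Dp ^ mu2 * pvar (Zv 0) ^ (mu1 - mu2 - j) =
     (pvar (Yv 0) ^ j * Dp ^ (mu2 - d) * pvar (Zv 0) ^ (mu1 - mu2 - j)) * (Dp::'k pol) ^ d"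
  proof -
    have "Dp ^ mu2 = Dp ^ (mu2 - d) * (Dp::'k pol) ^ d" using d by (simp add: power_add[symmetric])
    then show ?thesis by (simp add: ac_simps)
  qed
  show ?thesis unfolding w_elem_def e by (rule J_mul[OF T D])
qed

lemma gen_in:
  assumes T: "T_ideal I" and a: "(a, 0) \<in> I" and a0: "a \<noteq> (0 :: nat \<Rightarrow>\<^sub>0 'k::field)"
  shows "gen j \<in> I"
proof -
  obtain i0 where i0: "i0 \<in> Poly_Mapping.keys a"
    using a0 by (metis all_not_in_conv lookup_zero not_in_keys_iff_lookup_eq_zero poly_mapping_eqI)
  define L where "L = (\<lambda>i. if i = i0 then Poly_Mapping.single j (1 / Poly_Mapping.lookup a i0) else 0)"
  have "lmap L a = (\<Sum>i\<in>Poly_Mapping.keys a. if i = i0 then Poly_Mapping.single j 1 else 0)"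
    unfolding lmap_def
  proof (intro sum.cong refl)
    fix i assume "i \<in> Poly_Mapping.keys a"
    then show "Poly_Mapping.single 0 (Poly_Mapping.lookup a i) * L i = (if i = i0 then Poly_Mapping.single j 1 else 0)"
      by (auto simp: L_def mult_single in_keys_iff)
  qed
  also have "\<dots> = Poly_Mapping.single j 1" using i0 by simp
  finally have l: "lmap L a = Poly_Mapping.single j 1" .
  have "phi L ` I \<subseteq> I" using T endo_phi[of L] unfolding T_ideal_def by blast
  then have "phi L (a, 0) \<in> I" using a by blast
  then show ?thesis by (simp add: phi_def l gen_def)
qed

lemma lin_one: "lin V (1::nat \<Rightarrow>\<^sub>0 'k::comm_ring_1) = pvar (V 0)"
  using lin_single[of V 0 "1::'k"] by simp

lemma Dp_in:
  assumes T: "T_ideal I" and g0: "gen 0 \<in> I" and g1: "(gen 1 :: 'k::field bel) \<in> I"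
  shows "(0, Dp :: 'k pol) \<in> I"
proof -
  have B: "bideal I" using T by (simp add: T_ideal_def)
  have "bmul (gen 0) (gen 1) \<in> I" using bideal_mul[OF B g0 gen_FB] by blast
  then have 1: "(0, pvar (Yv 0) * pvar (Zv 1) :: 'k pol) \<in> I"
    by (simp add: bmul_def gen_def ylin_lin zlin_lin lin_single lin_one)
  have "bmul (gen 1) (gen 0) \<in> I" using bideal_mul[OF B g1 gen_FB] by blast
  then have 2: "(0, pvar (Yv 1) * pvar (Zv 0) :: 'k pol) \<in> I"
    by (simp add: bmul_def gen_def ylin_lin zlin_lin lin_single lin_one)
  have "(0, pvar (Yv 0) * pvar (Zv 1) + Cst (-1) * (pvar (Yv 1) * pvar (Zv 0)) :: 'k pol) \<in> I"
    by (rule J_add[OF T 1 J_smul[OF T 2]])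
  then show ?thesis by (simp add: Cst_minus)
qed

fun idx :: "var \<Rightarrow> nat" where
  "idx (Yv i) = i" | "idx (Zv i) = i"

lemma keys_nonempty: "P \<noteq> 0 \<Longrightarrow> \<exists>m. m \<in> Poly_Mapping.keys P"
  by (metis lookup_zero not_in_keys_iff_lookup_eq_zero poly_mapping_eqI)

lemma main_trick:
  fixes Pd :: "'k::field_char_0 pol"
  assumes T: "T_ideal I" and PdI: "(0, Pd) \<in> I" and Pd0: "Pd \<noteq> 0"
    and homog: "\<And>m. m \<in> Poly_Mapping.keys Pd \<Longrightarrow> mdeg m = d"
  shows "(0, Dp ^ d) \<in> I"
proof -
  define N where "N = 2 + (\<Sum>m\<in>Poly_Mapping.keys Pd. \<Sum>v\<in>Poly_Mapping.keys m. idx v)"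
  have N2: "2 \<le> N" unfolding N_def by simp
  have bound: "idx v < N" if m: "m \<in> Poly_Mapping.keys Pd" and v: "v \<in> Poly_Mapping.keys m" for m v
  proof -
    have "idx v \<le> (\<Sum>v\<in>Poly_Mapping.keys m. idx v)" using v by (intro member_le_sum) auto
    also have "\<dots> \<le> (\<Sum>m\<in>Poly_Mapping.keys Pd. \<Sum>v\<in>Poly_Mapping.keys m. idx v)"
      using m by (intro member_le_sum) auto
    finally show ?thesis unfolding N_def by simp
  qed
  define F where "F = Yv ` {..<N} \<union> Zv ` {..<N}"
  have finF: "finite F" unfolding F_def by simp
  have varsF: "v \<in> F" if "m \<in> Poly_Mapping.keys Pd" "v \<in> Poly_Mapping.keys m" for m v
    using bound[OF that] unfolding F_def by (cases v) auto
  have "\<exists>c. S (\<lambda>v. Cst (c v)) Pd \<noteq> 0"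
  proof (rule ccontr)
    assume "\<not> ?thesis"
    then have all0: "\<And>c. S (\<lambda>v. Cst (c v)) Pd = 0" by blast
    have "S (\<lambda>v. if v \<in> F then pvar v else pvar v) Pd \<in> {0}"
    proof (rule MV[OF _ _ _ finF])
      fix c
      have "S (\<lambda>v. if v \<in> F then Cst (c v) else pvar v) Pd = S (\<lambda>v. Cst (c v)) Pd"
        by (rule S_cong) (use varsF in auto)
      then show "S (\<lambda>v. if v \<in> F then Cst (c v) else pvar v) Pd \<in> {0}" using all0 by simp
    qed auto
    then have "Pd = 0" by (simp add: S_id)
    then show False using Pd0 by simp
  qed
  then obtain c where c: "S (\<lambda>v. Cst (c v)) Pd \<noteq> 0" by blast
  obtain e where e: "S (\<lambda>v. Cst (c v)) Pd = Cst e" using S_Cst_fun by blast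
  have e0: "e \<noteq> 0" using c e by auto
  define \<tau> :: "var \<Rightarrow> 'k pol" where "\<tau> v = (case v of
      Yv i \<Rightarrow> pvar (Yv (N + 2*i)) * pvar (Yv 0) + pvar (Yv (N + 2*i + 1)) * pvar (Yv 1)
    | Zv i \<Rightarrow> pvar (Yv (N + 2*i)) * pvar (Zv 0) + pvar (Yv (N + 2*i + 1)) * pvar (Zv 1))" for v
  define Q where "Q = S \<tau> Pd"
  define F2 where "F2 = Yv ` {N..<3*N}"
  have finF2: "finite F2" unfolding F2_def by simp
  have inF2: "Yv x \<in> F2 \<longleftrightarrow> N \<le> x \<and> x < 3*N" for x unfolding F2_def by auto
  have ZnF2: "Zv x \<notin> F2" for x unfolding F2_def by auto
  have idxY: "i < N" if "m \<in> Poly_Mapping.keys Pd" "Yv i \<in> Poly_Mapping.keys m" for m i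
    using bound[OF that] by simp
  have idxZ: "i < N" if "m \<in> Poly_Mapping.keys Pd" "Zv i \<in> Poly_Mapping.keys m" for m i
    using bound[OF that] by simp
  let ?J = "{q. (0, q) \<in> I}"
  have "S (\<lambda>v. if v \<in> F2 then (case v of Yv j \<Rightarrow>
      (if even (j - N) then Cst (c (Yv ((j - N) div 2))) * pvar (Zv 1) - Cst (c (Zv ((j - N) div 2))) * pvar (Yv 1)
       else Cst (c (Zv ((j - N) div 2))) * pvar (Yv 0) - Cst (c (Yv ((j - N) div 2))) * pvar (Zv 0))
      | Zv j \<Rightarrow> 0) else pvar v) Q \<in> ?J" (is "S ?\<rho>F Q \<in> _")
  proof (rule MV[OF _ _ _ finF2])
    show "0 \<in> ?J" using J_0[OF T] by simp
    show "x + y \<in> ?J" if "x \<in> ?J" "y \<in> ?J" for x y using that J_add[OF T] by simp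
    show "q * x \<in> ?J" if "x \<in> ?J" for x q using that J_mul[OF T] by simp
  next
    fix c2 :: "var \<Rightarrow> 'k"
    let ?\<rho>2 = "\<lambda>v. if v \<in> F2 then Cst (c2 v) else pvar v"
    define L2 :: "nat \<Rightarrow> nat \<Rightarrow>\<^sub>0 'k" where "L2 i = Poly_Mapping.single 0 (c2 (Yv (N + 2*i))) + Poly_Mapping.single 1 (c2 (Yv (N + 2*i + 1)))" for i
    have "S ?\<rho>2 Q = S (\<lambda>v. S ?\<rho>2 (\<tau> v)) Pd" unfolding Q_def by (rule S_comp)
    also have "\<dots> = S (rhoL L2) Pd"
    proof (rule S_cong)
      fix m v assume m: "m \<in> Poly_Mapping.keys Pd" and v: "v \<in> Poly_Mapping.keys m"
      show "S ?\<rho>2 (\<tau> v) = rhoL L2 v"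
      proof (cases v)
        case (Yv i)
        then have "i < N" using idxY m v by blast
        then show ?thesis using Yv N2
          by (simp add: \<tau>_def rhoL_def L2_def S_add S_mult inF2 lin_add lin_single lin_one)
      next
        case (Zv i)
        then have "i < N" using idxZ m v by blast
        then show ?thesis using Zv N2
          by (simp add: \<tau>_def rhoL_def L2_def S_add S_mult inF2 ZnF2 lin_add lin_single lin_one)
      qed
    qed
    finally have eq: "S ?\<rho>2 Q = S (rhoL L2) Pd" .
    show "S ?\<rho>2 Q \<in> ?J" unfolding eq using J_endo[OF T PdI] by simp
  qed
  moreover have "S ?\<rho>F Q = Dp ^ d * Cst e"
  proof -
    have "S ?\<rho>F Q = S (\<lambda>v. S ?\<rho>F (\<tau> v)) Pd" unfolding Q_def by (rule S_comp)
    also have "\<dots> = S (\<lambda>v. Dp * Cst (c v)) Pd"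
    proof (rule S_cong)
      fix m v assume m: "m \<in> Poly_Mapping.keys Pd" and v: "v \<in> Poly_Mapping.keys m"
      show "S ?\<rho>F (\<tau> v) = Dp * Cst (c v)"
      proof (cases v)
        case (Yv i)
        then have "i < N" using idxY m v by blast
        then show ?thesis using Yv N2
          by (simp add: \<tau>_def S_add S_mult inF2 algebra_simps)
      next
        case (Zv i)
        then have "i < N" using idxZ m v by blast
        then show ?thesis using Zv N2
          by (simp add: \<tau>_def S_add S_mult inF2 ZnF2 algebra_simps)
      qed
    qed
    also have "\<dots> = Dp ^ d * S (\<lambda>v. Cst (c v)) Pd" by (rule S_hom) (rule homog)
    finally show ?thesis using e by simp
  qed
  ultimately have "(0, Dp ^ d * Cst e) \<in> I" by simp
  then have "(0, Cst (1 / e) * (Dp ^ d * Cst e)) \<in> I" by (rule J_smul[OF T])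
  moreover have "Cst (1 / e) * (Dp ^ d * Cst e) = (Dp ^ d :: 'k pol)"
  proof -
    have ce: "Cst (1 / e) * Cst e = (1::'k pol)" using e0 by (simp add: Cst_mult[symmetric])
    have "Cst (1 / e) * (Dp ^ d * Cst e) = (Cst (1 / e) * Cst e) * (Dp ^ d :: 'k pol)"
      by (simp only: ac_simps)
    then show ?thesis by (simp only: ce mult_1_left)
  qed
  ultimately show ?thesis by simp
qed

theorem corollary4p3:
  fixes f :: "('k::field_char_0) bel"
    and k mu1 mu2 j :: nat
  assumes "f \<in> FB" and "f \<noteq> bzero" and "bdeg f = k"
    and "0 < mu2" and "mu2 \<le> mu1" and "k \<le> mu2" and "j \<le> mu1 - mu2"
  shows "(w_elem j mu1 mu2 :: 'k bel) \<in> T_ideal_gen f"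
  unfolding T_ideal_gen_def
proof (rule InterI)
  fix I assume "I \<in> {I. T_ideal I \<and> f \<in> I}"
  then have T: "T_ideal I" and fI: "f \<in> I" by auto
  obtain a P where fP: "f = (a, P)" by (cases f)
  have aI: "(a, 0) \<in> I" and hI: "\<And>d. (0, hom d P) \<in> I"
    using comp_in[OF T fI[unfolded fP]] by auto
  show "w_elem j mu1 mu2 \<in> I"
  proof (cases "a = 0")
    case False
    have "(0, Dp :: 'k pol) \<in> I"
      by (rule Dp_in[OF T gen_in[OF T aI False] gen_in[OF T aI False]])
    then have "(0, (Dp :: 'k pol) ^ 1) \<in> I" by simp
    then show ?thesis by (rule finish[OF T]) (use assms(4) in simp)
  next
    case True
    then have P0: "P \<noteq> 0" using assms(2) fP by (auto simp: bzero_def)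
    obtain m0 where m0: "m0 \<in> Poly_Mapping.keys P" using keys_nonempty[OF P0] by blast
    define d where "d = mdeg m0"
    have Pd0: "hom d P \<noteq> 0"
    proof
      assume "hom d P = 0"
      then have "Poly_Mapping.lookup (hom d P) m0 = 0" by simp
      then show False using m0 by (simp add: lookup_hom d_def in_keys_iff)
    qed
    have D: "(0, Dp ^ d) \<in> I"
      by (rule main_trick[OF T hI Pd0]) (simp add: keys_hom)
    have "d \<le> k"
    proof -
      have "k = Max (mdeg ` Poly_Mapping.keys P)" using assms(3) True fP by (simp add: bdeg_def)
      then show ?thesis using m0 unfolding d_def by simp
    qed
    then have dmu: "d \<le> mu2" using assms(6) by linarith
    show ?thesis by (rule finish[OF T D dmu])
  qed
qed

end
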